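(* For $n\ge1$, $q\in\mathbb{C}$ and indeterminates $z_1,\dots,z_n$, $$\sum_{\sigma\in\mathbb{S}_n}\mathrm{sgn}(\sigma)\prod_{1\le i<j\le n}\big(z_{\sigma(j)}-qz_{\sigma(i)}-(1-q)z_{\sigma(i)}z_{\sigma(j)}\big)=[n]_q!\prod_{1\le i<j\le n}(z_j-z_i).$$
   Context: $[k]_q=1+q+\cdots+q^{k-1}$ and $[n]_q!=[1]_q[2]_q\cdots[n]_q$. *)

theory Defs
  imports Complex_Main "HOL-Combinatorics.Combinatorics"
begin

definition qint :: "complex \<Rightarrow> nat \<Rightarrow> complex" where
  "qint q k = (\<Sum>i<k. q ^ i)"

definition qfact :: "complex \<Rightarrow> nat \<Rightarrow> complex" where
  "qfact q n = (\<Prod>k=1..n. qint q k)"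

end

theory Submission
  imports Defs
begin


definition Pn :: "nat \<Rightarrow> (nat \<times> nat) set" where
  "Pn n = Sigma {1..n} (\<lambda>i. {i+1..n})"

definition Delta :: "nat \<Rightarrow> (nat \<Rightarrow> complex) \<Rightarrow> complex" where
  "Delta n w = (\<Prod>i=1..n. \<Prod>j=i+1..n. w j - w i)"

definition SgE :: "nat \<Rightarrow> (nat \<Rightarrow> nat) \<Rightarrow> complex" where
  "SgE n s = (\<Prod>p\<in>Pn n. if s (fst p) < s (snd p) then 1 else -1)"

lemma finite_Pn[simp]: "finite (Pn n)" by (simp add: Pn_def)

lemma Delta_pairs: "Delta n w = (\<Prod>p\<in>Pn n. w (snd p) - w (fst p))"
  unfolding Delta_def Pn_def by (subst prod.Sigma) (auto simp: case_prod_beta)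

lemma minmax:
  fixes a b c d :: nat
  assumes "min a b = min c d" "max a b = max c d"
  shows "a = c \<and> b = d \<or> a = d \<and> b = c"
  using assms by (simp add: min_def max_def split: if_splits)

lemma Delta_perm:
  assumes s: "s permutes {1..n}"
  shows "Delta n (\<lambda>i. w (s i)) = SgE n s * Delta n w"
proof -
  define \<phi> where "\<phi> p = (min (s (fst p)) (s (snd p)), max (s (fst p)) (s (snd p)))" for p
  have inj: "inj s" using s permutes_inj by blast
  have mem: "s x \<in> {1..n} \<longleftrightarrow> x \<in> {1..n}" for x using permutes_in_image[OF s] .
  have sub: "\<phi> ` Pn n \<subseteq> Pn n"
  proof
    fix p assume "p \<in> \<phi> ` Pn n"
    then obtain i j where ij: "(i,j) \<in> Pn n" "p = \<phi> (i,j)" by auto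
    then have "i \<in> {1..n}" "j \<in> {1..n}" "i \<noteq> j" by (auto simp: Pn_def)
    then have "s i \<in> {1..n}" "s j \<in> {1..n}" "s i \<noteq> s j" using mem inj by (auto dest: injD)
    then show "p \<in> Pn n" using ij(2) by (cases "s i < s j") (auto simp: Pn_def \<phi>_def)
  qed
  have injp: "inj_on \<phi> (Pn n)"
  proof (rule inj_onI)
    fix p p' assume "p \<in> Pn n" "p' \<in> Pn n" "\<phi> p = \<phi> p'"
    then obtain i j i' j' where "p = (i,j)" "p' = (i',j')" "i < j" "i' < j'"
      and e: "min (s i) (s j) = min (s i') (s j')" "max (s i) (s j) = max (s i') (s j')"
      by (cases p, cases p') (auto simp: Pn_def \<phi>_def)
    moreover have "s i = s i' \<and> s j = s j' \<or> s i = s j' \<and> s j = s i'"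
      using minmax[OF e] .
    then have "i = i' \<and> j = j' \<or> i = j' \<and> j = i'" using inj by (auto dest: injD)
    ultimately show "p = p'" by auto
  qed
  have bij: "bij_betw \<phi> (Pn n) (Pn n)"
    using endo_inj_surj[OF finite_Pn sub injp] injp by (simp add: bij_betw_def)
  have pt: "w (s (snd p)) - w (s (fst p)) =
      (if s (fst p) < s (snd p) then 1 else -1) * (w (snd (\<phi> p)) - w (fst (\<phi> p)))"
    if "p \<in> Pn n" for p
  proof -
    have "fst p \<noteq> snd p" using that by (auto simp: Pn_def)
    then have "s (fst p) \<noteq> s (snd p)" using inj by (auto dest: injD)
    then show ?thesis by (cases "s (fst p) < s (snd p)") (auto simp: \<phi>_def)
  qed
  have "Delta n (\<lambda>i. w (s i)) = (\<Prod>p\<in>Pn n. (if s (fst p) < s (snd p) then 1 else -1) * (w (snd (\<phi> p)) - w (fst (\<phi> p))))"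
    unfolding Delta_pairs by (rule prod.cong) (auto simp: pt)
  also have "\<dots> = SgE n s * (\<Prod>p\<in>Pn n. w (snd (\<phi> p)) - w (fst (\<phi> p)))"
    by (simp add: prod.distrib SgE_def)
  also have "(\<Prod>p\<in>Pn n. w (snd (\<phi> p)) - w (fst (\<phi> p))) = Delta n w"
    unfolding Delta_pairs using prod.reindex_bij_betw[OF bij, of "\<lambda>p. w (snd p) - w (fst p)"] by simp
  finally show ?thesis .
qed

lemma Delta_nat_nz: "Delta n (\<lambda>i. of_nat i) \<noteq> 0"
  unfolding Delta_def by (auto simp: prod_zero_iff)

lemma SgE_comp:
  assumes "s permutes {1..n}" "r permutes {1..n}"
  shows "SgE n (s \<circ> r) = SgE n s * SgE n r"
proof -
  let ?w = "\<lambda>i. of_nat i :: complex"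
  have "Delta n (\<lambda>i. ?w ((s \<circ> r) i)) = SgE n (s \<circ> r) * Delta n ?w"
    using Delta_perm[OF permutes_compose[OF assms(2,1)]] .
  moreover have "Delta n (\<lambda>i. ?w ((s \<circ> r) i)) = Delta n (\<lambda>i. (\<lambda>k. ?w (s k)) (r i))" by simp
  also have "\<dots> = SgE n r * Delta n (\<lambda>k. ?w (s k))" using Delta_perm[OF assms(2)] .
  also have "\<dots> = SgE n r * (SgE n s * Delta n ?w)" using Delta_perm[OF assms(1)] by simp
  ultimately show ?thesis using Delta_nat_nz by (simp add: mult_ac comp_def)
qed

lemma SgE_id: "SgE n id = 1"
  unfolding SgE_def by (rule prod.neutral) (auto simp: Pn_def)

lemma adj_lt:
  fixes i j a :: nat assumes "i < j"
  shows "(Transposition.transpose a (a+1) i < Transposition.transpose a (a+1) j) = ((i,j) \<noteq> (a, a+1))"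
  using assms unfolding transpose_def by auto

lemma SgE_adj:
  assumes "1 \<le> a" "a + 1 \<le> n"
  shows "SgE n (Transposition.transpose a (a+1)) = -1"
proof -
  have "SgE n (Transposition.transpose a (a+1)) = (\<Prod>p\<in>Pn n. if p = (a, a+1) then -1 else 1)"
    unfolding SgE_def
  proof (rule prod.cong)
    fix p assume "p \<in> Pn n"
    then obtain i j where p: "p = (i,j)" "i < j" by (auto simp: Pn_def)
    show "(if Transposition.transpose a (a+1) (fst p) < Transposition.transpose a (a+1) (snd p) then 1 else -1)
       = (if p = (a, a+1) then -1 else (1::complex))"
      using adj_lt[OF p(2), of a] p(1) by simp
  qed simp
  also have "\<dots> = -1" using assms by (simp add: prod.delta' Pn_def)
  finally show ?thesis .
qed

lemma SgE_tr_step: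
  assumes "a < b" "1 \<le> a" "b + 1 \<le> n"
  shows "SgE n (Transposition.transpose a (b+1)) = SgE n (Transposition.transpose a b)"
proof -
  let ?t = "Transposition.transpose b (b+1)"
  have eq: "Transposition.transpose a (b+1) = ?t \<circ> (Transposition.transpose a b \<circ> ?t)"
    using assms unfolding fun_eq_iff comp_def transpose_def by simp
  have p1: "?t permutes {1..n}" using assms by (intro permutes_swap_id) auto
  have p2: "Transposition.transpose a b permutes {1..n}" using assms by (intro permutes_swap_id) auto
  have "SgE n (Transposition.transpose a (b+1)) = SgE n ?t * (SgE n (Transposition.transpose a b) * SgE n ?t)"
    unfolding eq using p1 p2 by (simp add: SgE_comp permutes_compose)
  also have "\<dots> = SgE n (Transposition.transpose a b)"
    using SgE_adj[of b n] assms by simp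
  finally show ?thesis .
qed

lemma SgE_tr_lt:
  assumes "a < b" "1 \<le> a" "b \<le> n"
  shows "SgE n (Transposition.transpose a b) = -1"
proof -
  have "Suc (a + d) \<le> n \<longrightarrow> SgE n (Transposition.transpose a (Suc (a + d))) = -1" for d
  proof (induction d)
    case 0 show ?case using SgE_adj[of a n] assms(2) by simp
  next
    case (Suc d)
    show ?case
    proof
      assume le: "Suc (a + Suc d) \<le> n"
      have "SgE n (Transposition.transpose a (Suc (a + d) + 1)) = SgE n (Transposition.transpose a (Suc (a + d)))"
        by (rule SgE_tr_step) (use le assms(2) in auto)
      moreover have "Suc (a + d) + 1 = Suc (a + Suc d)" by simp
      ultimately show "SgE n (Transposition.transpose a (Suc (a + Suc d))) = -1"
        using Suc.IH le by simp
    qed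
  qed
  moreover obtain d where "b = Suc (a + d)" using less_imp_Suc_add[OF assms(1)] by blast
  ultimately show ?thesis using assms(3) by blast
qed

lemma SgE_tr:
  assumes "a \<noteq> b" "a \<in> {1..n}" "b \<in> {1..n}"
  shows "SgE n (Transposition.transpose a b) = -1"
proof (cases "a < b")
  case True then show ?thesis using assms SgE_tr_lt by auto
next
  case False then show ?thesis using assms SgE_tr_lt[of b a n] by (auto simp: transpose_commute)
qed

lemma SgE_sign:
  assumes "s permutes {1..n}"
  shows "SgE n s = of_int (sign s)"
  using assms finite_atLeastAtMost
proof (induction rule: permutes_induct)
  case id then show ?case using SgE_id[of n] by (simp add: id_def)
next
  case (swap a b p)
  have pt: "Transposition.transpose a b permutes {1..n}" using swap by (intro permutes_swap_id) auto
  have s1: "sign (Transposition.transpose a b \<circ> p) = sign (Transposition.transpose a b) * sign p"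
    using swap by (intro sign_compose permutation_swap_id permutes_imp_permutation[of "{1..n}" p]) auto
  have s2: "SgE n (Transposition.transpose a b \<circ> p) = SgE n (Transposition.transpose a b) * SgE n p"
    using SgE_comp[OF pt, of p] swap by blast
  have s3: "SgE n (Transposition.transpose a b) = -1" using swap by (intro SgE_tr) auto
  have s4: "sign (Transposition.transpose a b) = -1" using swap(3) by (simp add: sign_swap_id)
  have s5: "SgE n p = of_int (sign p)" using swap(5) .
  show ?case unfolding s1 s2 s3 s4 s5 by simp
qed

lemma Delta_sign:
  assumes "s permutes {1..n}"
  shows "Delta n (\<lambda>i. w (s i)) = of_int (sign s) * Delta n w"
  using Delta_perm[OF assms] SgE_sign[OF assms] by simp



definition tm :: "(nat \<Rightarrow> complex) \<Rightarrow> complex \<Rightarrow> nat set \<Rightarrow> nat \<Rightarrow> complex" where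
  "tm x q S k = (\<Prod>m\<in>S-{k}. (x k - q * x m) / (x k - x m))"

definition Phi :: "(nat \<Rightarrow> complex) \<Rightarrow> complex \<Rightarrow> nat set \<Rightarrow> complex \<Rightarrow> complex" where
  "Phi x q S t = (\<Prod>m\<in>S. (t - q * x m) / (t - x m))"

lemma tm_insert:
  assumes "finite S" "a \<notin> S" "k \<in> S"
  shows "tm x q (insert a S) k = tm x q S k * ((x k - q * x a) / (x k - x a))"
proof -
  have "insert a S - {k} = insert a (S - {k})" using assms by auto
  then show ?thesis using assms by (simp add: tm_def mult.commute)
qed

lemma tm_insert_a:
  assumes "a \<notin> S"
  shows "tm x q (insert a S) a = Phi x q S (x a)"
proof -
  have "insert a S - {a} = S" using assms by auto
  then show ?thesis by (simp add: tm_def Phi_def)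
qed

lemma pf1c:
  fixes xk u t q A B C :: complex
  assumes "A \<noteq> 0" "B \<noteq> 0" "C \<noteq> 0" and d: "A = xk - u" "B = xk - t" "C = u - t"
  shows "(xk - q * u) / A / B = (1 - q) * u / C * (1 / A) + (t - q * u) / (- C) * (1 / B)"
proof -
  have h: "(xk - q * u) * C = (1 - q) * u * B - (t - q * u) * A" unfolding d by (simp add: algebra_simps)
  have "(1 - q) * u / C * (1 / A) + (t - q * u) / (- C) * (1 / B) = ((1 - q) * u * B - (t - q * u) * A) / (A * B * C)"
    using assms(1-3) by (simp add: field_simps; simp add: algebra_simps)
  also have "\<dots> = (xk - q * u) * C / (A * B * C)" using h by simp
  also have "\<dots> = (xk - q * u) / A / B" using assms(1-3) by simp
  finally show ?thesis by simp
qed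

lemma pf1:
  fixes xk u t q :: complex
  assumes "xk \<noteq> u" "xk \<noteq> t" "u \<noteq> t"
  shows "(xk - q * u) / (xk - u) / (xk - t) =
     (1 - q) * u / (u - t) * (1 / (xk - u)) + (t - q * u) / (t - u) * (1 / (xk - t))"
proof -
  have e: "t - u = - (u - t)" by simp
  show ?thesis unfolding e by (rule pf1c) (use assms in auto)
qed

lemma alg2c:
  fixes u t q Pa Pt qn C :: complex
  assumes "C \<noteq> 0" "C = u - t"
  shows "(1 - q) * t * Pa / C + (1 - q) * t / C * (qn - Pa) + (t - q * u) / (- C) * (qn - Pt)
     = q * qn - Pt * ((t - q * u) / (- C))"
proof -
  have "(1 - q) * t * Pa + (1 - q) * t * (qn - Pa) - (t - q * u) * (qn - Pt) = q * qn * C + Pt * (t - q * u)"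
    unfolding assms(2) by (simp add: algebra_simps)
  then show ?thesis using assms(1) by (simp add: field_simps)
qed

lemma alg2:
  fixes u t q B D Pa Pt qn :: complex
  assumes "u \<noteq> t" "(1 - q) * u * B = qn - Pa" "(1 - q) * t * D = qn - Pt"
  shows "(1 - q) * t * (Pa / (u - t) + ((1 - q) * u / (u - t) * B + (t - q * u) / (t - u) * D))
     = q * qn - Pt * ((t - q * u) / (t - u))"
proof -
  have e: "(1 - q) * t * (Pa / (u - t) + ((1 - q) * u / (u - t) * B + (t - q * u) / (t - u) * D))
     = (1 - q) * t * Pa / (u - t) + (1 - q) * t / (u - t) * ((1 - q) * u * B)
       + (t - q * u) / (t - u) * ((1 - q) * t * D)"
    by (simp add: algebra_simps)
  have e2: "t - u = - (u - t)" by simp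
  show ?thesis unfolding e assms(2,3) unfolding e2 by (rule alg2c) (use assms in auto)
qed

lemma I2:
  assumes "finite S" "inj_on x S"
  shows "\<forall>t. t \<notin> x ` S \<longrightarrow>
    (1 - q) * t * (\<Sum>k\<in>S. tm x q S k / (x k - t)) = q ^ card S - Phi x q S t"
  using assms
proof (induction S rule: finite_induct)
  case empty then show ?case by (simp add: Phi_def)
next
  case (insert a S)
  have injS: "inj_on x S" using insert by auto
  have xa: "x a \<notin> x ` S" using insert by auto
  note IH = insert.IH[OF injS]
  show ?case
  proof (intro allI impI)
    fix t assume t: "t \<notin> x ` insert a S"
    have tS: "t \<notin> x ` S" and ta: "x a \<noteq> t" using t by auto
    have sum: "(\<Sum>k\<in>insert a S. tm x q (insert a S) k / (x k - t)) =
      Phi x q S (x a) / (x a - t) + ((1 - q) * x a / (x a - t) * (\<Sum>k\<in>S. tm x q S k / (x k - x a))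
        + (t - q * x a) / (t - x a) * (\<Sum>k\<in>S. tm x q S k / (x k - t)))"
    proof -
      have "(\<Sum>k\<in>S. tm x q (insert a S) k / (x k - t)) =
         (\<Sum>k\<in>S. (1 - q) * x a / (x a - t) * (tm x q S k / (x k - x a))
             + (t - q * x a) / (t - x a) * (tm x q S k / (x k - t)))"
      proof (rule sum.cong)
        fix k assume k: "k \<in> S"
        have ne: "x k \<noteq> x a" "x k \<noteq> t" using k xa tS by (metis image_eqI)+
        have "tm x q (insert a S) k / (x k - t) = tm x q S k * ((x k - q * x a) / (x k - x a) / (x k - t))"
          using tm_insert[OF insert(1,2) k] by simp
        also have "\<dots> = (1 - q) * x a / (x a - t) * (tm x q S k / (x k - x a))
             + (t - q * x a) / (t - x a) * (tm x q S k / (x k - t))"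
          unfolding pf1[OF ne ta] by (simp add: algebra_simps)
        finally show "tm x q (insert a S) k / (x k - t) = \<dots>" .
      qed simp
      then show ?thesis using insert(1,2)
        by (simp add: tm_insert_a sum.distrib sum_distrib_left)
    qed
    have "(1 - q) * t * (\<Sum>k\<in>insert a S. tm x q (insert a S) k / (x k - t))
        = q * q ^ card S - Phi x q S t * ((t - q * x a) / (t - x a))"
      unfolding sum by (rule alg2[OF ta]) (use IH xa tS in auto)
    also have "\<dots> = q ^ card (insert a S) - Phi x q (insert a S) t"
      using insert(1,2) by (simp add: Phi_def mult.commute)
    finally show "(1 - q) * t * (\<Sum>k\<in>insert a S. tm x q (insert a S) k / (x k - t)) =
          q ^ card (insert a S) - Phi x q (insert a S) t" .
  qed
qed

lemma qint_Suc: "qint q (Suc n) = qint q n + q ^ n"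
  by (simp add: qint_def)

lemma I1:
  assumes "finite S" "inj_on x S"
  shows "(\<Sum>k\<in>S. tm x q S k) = qint q (card S)"
  using assms
proof (induction S rule: finite_induct)
  case empty then show ?case by (simp add: qint_def)
next
  case (insert a S)
  have injS: "inj_on x S" using insert by auto
  have xa: "x a \<notin> x ` S" using insert by auto
  have B: "(1 - q) * x a * (\<Sum>k\<in>S. tm x q S k / (x k - x a)) = q ^ card S - Phi x q S (x a)"
    using I2[OF insert(1) injS] xa by blast
  have "(\<Sum>k\<in>S. tm x q (insert a S) k) = (\<Sum>k\<in>S. tm x q S k + (1 - q) * x a * (tm x q S k / (x k - x a)))"
  proof (rule sum.cong)
    fix k assume k: "k \<in> S"
    have ne: "x k - x a \<noteq> 0" using k xa by (metis image_eqI right_minus_eq)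
    show "tm x q (insert a S) k = tm x q S k + (1 - q) * x a * (tm x q S k / (x k - x a))"
      unfolding tm_insert[OF insert(1,2) k] using ne by (simp add: field_simps; simp add: algebra_simps)
  qed simp
  then have "(\<Sum>k\<in>insert a S. tm x q (insert a S) k) =
     Phi x q S (x a) + ((\<Sum>k\<in>S. tm x q S k) + (1 - q) * x a * (\<Sum>k\<in>S. tm x q S k / (x k - x a)))"
    using insert(1,2) by (simp add: tm_insert_a sum.distrib sum_distrib_left)
  also have "\<dots> = qint q (card (insert a S))"
    unfolding B insert.IH[OF injS] using insert(1,2) by (simp add: qint_Suc)
  finally show ?case .
qed

lemma mob:
  fixes a b q :: complex
  assumes "a \<noteq> 1" "b \<noteq> 1" "a \<noteq> b"
  shows "(a - q * b - (1 - q) * b * a) / (a - b) = (a / (1 - a) - q * (b / (1 - b))) / (a / (1 - a) - b / (1 - b))"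
proof -
  have nz: "1 - a \<noteq> 0" "1 - b \<noteq> 0" "a - b \<noteq> 0" using assms by auto
  have n: "a / (1 - a) - q * (b / (1 - b)) = (a - q * b - (1 - q) * b * a) / ((1 - a) * (1 - b))"
    using nz by (simp add: field_simps; simp add: algebra_simps)
  have d: "a / (1 - a) - b / (1 - b) = (a - b) / ((1 - a) * (1 - b))"
    using nz by (simp add: field_simps; simp add: algebra_simps)
  show ?thesis unfolding n d using nz by simp
qed

lemma key:
  fixes z :: "nat \<Rightarrow> complex"
  assumes "finite S" "inj_on z S" "\<forall>m\<in>S. z m \<noteq> 1"
  shows "(\<Sum>k\<in>S. \<Prod>m\<in>S-{k}. (z k - q * z m - (1 - q) * z m * z k) / (z k - z m)) = qint q (card S)"
proof -
  define x where "x i = z i / (1 - z i)" for i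
  have injx: "inj_on x S"
  proof (rule inj_onI)
    fix a b assume ab: "a \<in> S" "b \<in> S" "x a = x b"
    then have "z a \<noteq> 1" "z b \<noteq> 1" using assms by auto
    then have "z a = z b" using ab(3) by (simp add: x_def field_simps; simp add: algebra_simps)
    then show "a = b" using assms(2) ab by (auto dest: inj_onD)
  qed
  have "(\<Sum>k\<in>S. \<Prod>m\<in>S-{k}. (z k - q * z m - (1 - q) * z m * z k) / (z k - z m)) = (\<Sum>k\<in>S. tm x q S k)"
    unfolding tm_def
  proof (intro sum.cong prod.cong refl)
    fix k m assume k: "k \<in> S" and m: "m \<in> S - {k}"
    have ne: "z k \<noteq> 1" "z m \<noteq> 1" "z k \<noteq> z m" using assms k m by (auto dest: inj_onD)
    then have ne': "1 - z k \<noteq> 0" "1 - z m \<noteq> 0" "z k - z m \<noteq> 0" by auto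
    show "(z k - q * z m - (1 - q) * z m * z k) / (z k - z m) = (x k - q * x m) / (x k - x m)"
      unfolding x_def using mob[OF ne] .
  qed
  also have "\<dots> = qint q (card S)" by (rule I1[OF assms(1) injx])
  finally show ?thesis .
qed



lemma pair_split:
  "(\<Prod>i=1..Suc n. \<Prod>j=i+1..Suc n. G i j) = (\<Prod>i=1..n. \<Prod>j=i+1..n. G i j) * (\<Prod>i=1..n. G i (Suc n))"
proof -
  have "(\<Prod>i=1..Suc n. \<Prod>j=i+1..Suc n. G i j) = (\<Prod>i=1..n. \<Prod>j=i+1..Suc n. G i j)"
    by (simp add: prod.cl_ivl_Suc)
  also have "\<dots> = (\<Prod>i=1..n. (\<Prod>j=i+1..n. G i j) * G i (Suc n))"
    by (rule prod.cong) (auto simp: prod.cl_ivl_Suc)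
  also have "\<dots> = (\<Prod>i=1..n. \<Prod>j=i+1..n. G i j) * (\<Prod>i=1..n. G i (Suc n))"
    by (simp add: prod.distrib)
  finally show ?thesis .
qed

lemma qfact_Suc: "qfact q (Suc n) = qfact q n * qint q (Suc n)"
  by (simp add: qfact_def prod.cl_ivl_Suc)

lemma ord:
  "\<forall>h. (\<forall>S\<subseteq>{1..n}. (\<Sum>k\<in>S. \<Prod>m\<in>S-{k}. h m k) = qint q (card S)) \<longrightarrow>
     (\<Sum>\<sigma> | \<sigma> permutes {1..n}. \<Prod>i=1..n. \<Prod>j=i+1..n. h (\<sigma> i) (\<sigma> j)) = qfact q n"
proof (induction n)
  case 0
  show ?case by (simp add: qfact_def)
next
  case (Suc n)
  show ?case
  proof (intro allI impI)
    fix h :: "nat \<Rightarrow> nat \<Rightarrow> complex"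
    assume H: "\<forall>S\<subseteq>{1..Suc n}. (\<Sum>k\<in>S. \<Prod>m\<in>S-{k}. h m k) = qint q (card S)"
    have ins: "{1..Suc n} = insert (Suc n) {1..n}" by auto
    let ?F = "\<lambda>\<sigma>. \<Prod>i=1..Suc n. \<Prod>j=i+1..Suc n. h (\<sigma> i) (\<sigma> j)"
    have "(\<Sum>\<sigma> | \<sigma> permutes {1..Suc n}. ?F \<sigma>) =
       (\<Sum>b\<in>{1..Suc n}. \<Sum>p | p permutes {1..n}. ?F (Transposition.transpose (Suc n) b \<circ> p))"
      unfolding ins by (rule sum_over_permutations_insert) auto
    also have "\<dots> = (\<Sum>b\<in>{1..Suc n}. qfact q n * (\<Prod>m\<in>{1..Suc n}-{b}. h m b))"
    proof (rule sum.cong[OF refl])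
      fix b assume b: "b \<in> {1..Suc n}"
      define \<tau> where "\<tau> = Transposition.transpose (Suc n) b"
      have tp: "\<tau> permutes {1..Suc n}" unfolding \<tau>_def using b by (intro permutes_swap_id) auto
      have injt: "inj \<tau>" using tp permutes_inj by blast
      let ?h' = "\<lambda>a c. h (\<tau> a) (\<tau> c)"
      have H': "\<forall>S\<subseteq>{1..n}. (\<Sum>k\<in>S. \<Prod>m\<in>S-{k}. ?h' m k) = qint q (card S)"
      proof (intro allI impI)
        fix S assume S: "S \<subseteq> {1..n}"
        have "(\<Sum>k\<in>S. \<Prod>m\<in>S-{k}. ?h' m k) = (\<Sum>k\<in>S. \<Prod>m\<in>\<tau> ` S - {\<tau> k}. h m (\<tau> k))"
        proof (rule sum.cong[OF refl])
          fix k assume "k \<in> S"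
          have "\<tau> ` S - {\<tau> k} = \<tau> ` (S - {k})" using injt by (simp add: image_set_diff)
          moreover have "inj_on \<tau> (S - {k})" using injt by (auto intro: inj_on_subset)
          ultimately show "(\<Prod>m\<in>S-{k}. ?h' m k) = (\<Prod>m\<in>\<tau> ` S - {\<tau> k}. h m (\<tau> k))"
            by (simp add: prod.reindex)
        qed
        also have "\<dots> = (\<Sum>k\<in>\<tau> ` S. \<Prod>m\<in>\<tau> ` S - {k}. h m k)"
          using injt by (simp add: sum.reindex inj_on_subset[OF injt])
        also have "\<dots> = qint q (card (\<tau> ` S))"
        proof -
          have "\<tau> ` S \<subseteq> {1..Suc n}" using S permutes_in_image[OF tp] by auto
          then show ?thesis using H by blast
        qed
        also have "card (\<tau> ` S) = card S" using injt by (simp add: card_image inj_on_subset[OF injt])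
        finally show "(\<Sum>k\<in>S. \<Prod>m\<in>S-{k}. ?h' m k) = qint q (card S)" .
      qed
      have IH: "(\<Sum>p | p permutes {1..n}. \<Prod>i=1..n. \<Prod>j=i+1..n. ?h' (p i) (p j)) = qfact q n"
        by (rule mp[OF spec[OF Suc.IH, of ?h'] H'])
      have second: "(\<Prod>i=1..n. h (\<tau> (p i)) b) = (\<Prod>m\<in>{1..Suc n}-{b}. h m b)"
        if p: "p permutes {1..n}" for p
      proof -
        have pp: "(\<tau> \<circ> p) permutes {1..Suc n}"
          using permutes_compose[OF permutes_subset[OF p] tp] by auto
        have fix1: "(\<tau> \<circ> p) (Suc n) = b" using permutes_not_in[OF p] by (simp add: \<tau>_def)
        have "(\<tau> \<circ> p) ` ({1..Suc n} - {Suc n}) = (\<tau> \<circ> p) ` {1..Suc n} - {(\<tau> \<circ> p) (Suc n)}"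
          using image_set_diff[OF permutes_inj[OF pp], of "{1..Suc n}" "{Suc n}"] by simp
        also have "\<dots> = {1..Suc n} - {b}" using permutes_image[OF pp] fix1 by simp
        also have "{1..Suc n} - {Suc n} = {1..n}" by auto
        finally have img: "(\<tau> \<circ> p) ` {1..n} = {1..Suc n} - {b}" .
        have "inj_on (\<tau> \<circ> p) {1..n}" using permutes_inj[OF pp] by (auto intro: inj_on_subset)
        then show ?thesis using prod.reindex[of "\<tau> \<circ> p" "{1..n}" "\<lambda>m. h m b"] img by simp
      qed
      have "(\<Sum>p | p permutes {1..n}. ?F (\<tau> \<circ> p)) =
        (\<Sum>p | p permutes {1..n}. (\<Prod>i=1..n. \<Prod>j=i+1..n. ?h' (p i) (p j)) * (\<Prod>m\<in>{1..Suc n}-{b}. h m b))"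
      proof (rule sum.cong[OF refl])
        fix p assume "p \<in> {p. p permutes {1..n}}"
        then have p: "p permutes {1..n}" by simp
        have pn: "p (Suc n) = Suc n" using permutes_not_in[OF p] by simp
        have tn: "\<tau> (Suc n) = b" by (simp add: \<tau>_def)
        show "?F (\<tau> \<circ> p) = (\<Prod>i=1..n. \<Prod>j=i+1..n. ?h' (p i) (p j)) * (\<Prod>m\<in>{1..Suc n}-{b}. h m b)"
          unfolding pair_split[where G = "\<lambda>i j. h ((\<tau> \<circ> p) i) ((\<tau> \<circ> p) j)"]
          using second[OF p] pn tn by simp
      qed
      also have "\<dots> = qfact q n * (\<Prod>m\<in>{1..Suc n}-{b}. h m b)"
        by (simp only: sum_distrib_right[symmetric] IH)
      finally show "(\<Sum>p | p permutes {1..n}. ?F (Transposition.transpose (Suc n) b \<circ> p)) =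
          qfact q n * (\<Prod>m\<in>{1..Suc n}-{b}. h m b)" unfolding \<tau>_def .
    qed
    also have "\<dots> = qfact q n * qint q (Suc n)"
      by (subst sum_distrib_left[symmetric]) (use H[rule_format, of "{1..Suc n}"] in simp)
    also have "\<dots> = qfact q (Suc n)" by (simp add: qfact_Suc)
    finally show "(\<Sum>\<sigma> | \<sigma> permutes {1..Suc n}. ?F \<sigma>) = qfact q (Suc n)" .
  qed
qed



lemma sgnsq:
  fixes s P D :: complex
  assumes "s * s = 1"
  shows "s * (P * (s * D)) = P * D"
proof -
  have "s * (P * (s * D)) = (s * s) * (P * D)" by (simp add: algebra_simps)
  then show ?thesis using assms by simp
qed

lemma main_good:
  fixes n :: nat and q :: complex and z :: "nat \<Rightarrow> complex"
  assumes inj: "inj_on z {1..n}" and ne1: "\<forall>i\<in>{1..n}. z i \<noteq> 1"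
  shows "(\<Sum>\<sigma> | \<sigma> permutes {1..n}. of_int (sign \<sigma>) *
           (\<Prod>i=1..n. \<Prod>j=i+1..n.
              z (\<sigma> j) - q * z (\<sigma> i) - (1 - q) * z (\<sigma> i) * z (\<sigma> j)))
         = qfact q n * (\<Prod>i=1..n. \<Prod>j=i+1..n. z j - z i)"
proof -
  define hz where "hz a b = (z b - q * z a - (1 - q) * z a * z b) / (z b - z a)" for a b
  have trm: "of_int (sign \<sigma>) * (\<Prod>i=1..n. \<Prod>j=i+1..n.
              z (\<sigma> j) - q * z (\<sigma> i) - (1 - q) * z (\<sigma> i) * z (\<sigma> j))
      = (\<Prod>i=1..n. \<Prod>j=i+1..n. hz (\<sigma> i) (\<sigma> j)) * Delta n z"
    if s: "\<sigma> permutes {1..n}" for \<sigma>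
  proof -
    have "(\<Prod>i=1..n. \<Prod>j=i+1..n. z (\<sigma> j) - q * z (\<sigma> i) - (1 - q) * z (\<sigma> i) * z (\<sigma> j))
        = (\<Prod>i=1..n. \<Prod>j=i+1..n. hz (\<sigma> i) (\<sigma> j) * (z (\<sigma> j) - z (\<sigma> i)))"
    proof (rule prod.cong[OF refl], rule prod.cong[OF refl])
      fix i j assume i: "i \<in> {1..n}" and j: "j \<in> {i+1..n}"
      have m1: "\<sigma> i \<in> {1..n}" using i permutes_in_image[OF s] by blast
      have m2: "\<sigma> j \<in> {1..n}" using i j permutes_in_image[OF s] by simp
      have "i \<noteq> j" using j by simp
      then have ne: "\<sigma> j \<noteq> \<sigma> i" by (simp add: inj_eq[OF permutes_inj[OF s]])
      have d: "z (\<sigma> j) - z (\<sigma> i) \<noteq> 0"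
      proof
        assume "z (\<sigma> j) - z (\<sigma> i) = 0"
        then have "z (\<sigma> j) = z (\<sigma> i)" by simp
        then have "\<sigma> j = \<sigma> i" by (rule inj_onD[OF inj _ m2 m1])
        then show False using ne by simp
      qed
      show "z (\<sigma> j) - q * z (\<sigma> i) - (1 - q) * z (\<sigma> i) * z (\<sigma> j) =
          hz (\<sigma> i) (\<sigma> j) * (z (\<sigma> j) - z (\<sigma> i))" unfolding hz_def using d by simp
    qed
    also have "\<dots> = (\<Prod>i=1..n. \<Prod>j=i+1..n. hz (\<sigma> i) (\<sigma> j)) * Delta n (\<lambda>i. z (\<sigma> i))"
      by (simp add: Delta_def prod.distrib)
    also have "\<dots> = (\<Prod>i=1..n. \<Prod>j=i+1..n. hz (\<sigma> i) (\<sigma> j)) * (of_int (sign \<sigma>) * Delta n z)"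
      using Delta_sign[OF s] by simp
    finally have e: "(\<Prod>i=1..n. \<Prod>j=i+1..n. z (\<sigma> j) - q * z (\<sigma> i) - (1 - q) * z (\<sigma> i) * z (\<sigma> j))
       = (\<Prod>i=1..n. \<Prod>j=i+1..n. hz (\<sigma> i) (\<sigma> j)) * (of_int (sign \<sigma>) * Delta n z)" .
    have sq: "(of_int (sign \<sigma>) :: complex) * of_int (sign \<sigma>) = 1"
      by (metis of_int_1 of_int_mult sign_idempotent)
    show ?thesis unfolding e by (rule sgnsq[OF sq])
  qed
  have K: "\<forall>S\<subseteq>{1..n}. (\<Sum>k\<in>S. \<Prod>m\<in>S-{k}. hz m k) = qint q (card S)"
  proof (intro allI impI)
    fix S assume S: "S \<subseteq> {1..n}"
    have "finite S" using S finite_subset by blast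
    moreover have "inj_on z S" using inj S inj_on_subset by blast
    moreover have "\<forall>m\<in>S. z m \<noteq> 1" using ne1 S by blast
    ultimately show "(\<Sum>k\<in>S. \<Prod>m\<in>S-{k}. hz m k) = qint q (card S)"
      unfolding hz_def by (rule key)
  qed
  have "(\<Sum>\<sigma> | \<sigma> permutes {1..n}. of_int (sign \<sigma>) *
           (\<Prod>i=1..n. \<Prod>j=i+1..n.
              z (\<sigma> j) - q * z (\<sigma> i) - (1 - q) * z (\<sigma> i) * z (\<sigma> j)))
      = (\<Sum>\<sigma> | \<sigma> permutes {1..n}. (\<Prod>i=1..n. \<Prod>j=i+1..n. hz (\<sigma> i) (\<sigma> j)) * Delta n z)"
    by (rule sum.cong[OF refl], rule trm) simp
  also have "\<dots> = qfact q n * Delta n z"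
    by (subst sum_distrib_right[symmetric]) (simp only: mp[OF spec[OF ord[where n=n and q=q], of hz] K])
  finally show ?thesis by (simp add: Delta_def)
qed



theorem lemma4:
  fixes n :: nat and q :: complex and z :: "nat \<Rightarrow> complex"
  assumes "n \<ge> 1"
  shows "(\<Sum>\<sigma> | \<sigma> permutes {1..n}. of_int (sign \<sigma>) *
           (\<Prod>i=1..n. \<Prod>j=i+1..n.
              z (\<sigma> j) - q * z (\<sigma> i) - (1 - q) * z (\<sigma> i) * z (\<sigma> j)))
         = qfact q n * (\<Prod>i=1..n. \<Prod>j=i+1..n. z j - z i)"
proof -
  define L where "L w = (\<Sum>\<sigma> | \<sigma> permutes {1..n}. of_int (sign \<sigma>) *
           (\<Prod>i=1..n. \<Prod>j=i+1..n.
              w (\<sigma> j) - q * w (\<sigma> i) - (1 - q) * w (\<sigma> i) * w (\<sigma> j)))" for w :: "nat \<Rightarrow> complex"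
  define R where "R w = qfact q n * (\<Prod>i=1..n. \<Prod>j=i+1..n. w j - w i)" for w :: "nat \<Rightarrow> complex"
  define zt where "zt t i = z i + of_real t * of_nat i" for t :: real and i
  define G where "G t = L (zt t) - R (zt t)" for t
  have "isCont G 0"
    unfolding G_def L_def R_def zt_def by (intro continuous_intros)
  then have lim: "(G \<longlongrightarrow> G 0) (at_right 0)"
    by (simp add: isCont_def filterlim_at_split)
  define C where "C = (\<lambda>(i,j). (z j - z i) / (of_nat i - of_nat j)) ` ({1..n} \<times> {1..n})
      \<union> (\<lambda>i. (1 - z i) / of_nat i) ` {1..n}"
  define B where "B = Re ` C"
  have finB: "finite B" unfolding B_def C_def by (intro finite_imageI finite_UnI finite_cartesian_product) auto
  have good: "G t = 0" if t: "t \<notin> B" for t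
  proof -
    have inj: "inj_on (zt t) {1..n}"
    proof (rule inj_onI)
      fix i j assume i: "i \<in> {1..n}" and j: "j \<in> {1..n}" and e: "zt t i = zt t j"
      show "i = j"
      proof (rule ccontr)
        assume ij: "i \<noteq> j"
        then have d: "(of_nat i - of_nat j :: complex) \<noteq> 0" by simp
        from e have "of_real t * (of_nat i - of_nat j) = z j - z i"
          unfolding zt_def by (simp add: algebra_simps)
        then have "complex_of_real t = (z j - z i) / (of_nat i - of_nat j)"
          using d by (simp add: field_simps)
        then have "t = Re ((z j - z i) / (of_nat i - of_nat j))" by (metis Re_complex_of_real)
        moreover have "(z j - z i) / (of_nat i - of_nat j) \<in> C"
          unfolding C_def using i j by (intro UnI1 image_eqI[of _ _ "(i,j)"]) auto
        ultimately show False using t unfolding B_def by blast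
      qed
    qed
    have ne1: "\<forall>i\<in>{1..n}. zt t i \<noteq> 1"
    proof (intro ballI notI)
      fix i assume i: "i \<in> {1..n}" and e: "zt t i = 1"
      then have d: "(of_nat i :: complex) \<noteq> 0" by simp
      from e have "of_real t * of_nat i = 1 - z i" unfolding zt_def by (simp add: algebra_simps)
      then have "complex_of_real t = (1 - z i) / of_nat i" using d by (simp add: field_simps)
      then have "t = Re ((1 - z i) / of_nat i)" by (metis Re_complex_of_real)
      moreover have "(1 - z i) / of_nat i \<in> C" unfolding C_def using i by blast
      ultimately show False using t unfolding B_def by blast
    qed
    have "L (zt t) = R (zt t)" unfolding L_def R_def by (rule main_good[OF inj ne1])
    then show ?thesis unfolding G_def by (simp only: right_minus_eq)
  qed
  define \<epsilon> where "\<epsilon> = Min (insert 1 {t\<in>B. t > 0})"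
  have fe: "finite (insert 1 {t\<in>B. t > 0})" using finB by auto
  have epos: "\<epsilon> > 0" unfolding \<epsilon>_def using fe by (subst Min_gr_iff) auto
  have "eventually (\<lambda>t. G t = 0) (at_right 0)"
    unfolding eventually_at_right_field
  proof (intro exI conjI allI impI)
    show "(0::real) < \<epsilon>" by (rule epos)
    fix t :: real assume t0: "0 < t" and te: "t < \<epsilon>"
    have "t \<notin> B"
    proof
      assume "t \<in> B"
      then have "\<epsilon> \<le> t" unfolding \<epsilon>_def using fe t0 by (intro Min_le) auto
      then show False using te by simp
    qed
    then show "G t = 0" by (rule good)
  qed
  then have ev: "eventually (\<lambda>t. 0 = G t) (at_right 0)" by (rule eventually_mono) simp
  have l0: "(G \<longlongrightarrow> 0) (at_right 0)"
    by (rule Lim_transform_eventually[OF tendsto_const ev])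
  have G0: "G 0 = 0" by (rule tendsto_unique[OF trivial_limit_at_right_real lim l0])
  have z0: "zt 0 = z" unfolding zt_def by (simp add: fun_eq_iff)
  have "L z - R z = 0" using G0 unfolding G_def z0 .
  then have "L z = R z" by (simp only: right_minus_eq)
  then show ?thesis unfolding L_def R_def .
qed

end
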